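(* For every graph $\mathcal{G}=(\mathcal{V},\mathcal{E})$ with $|\mathcal{V}|\ge4$ and no isolated vertices, the graph device $D(\mathcal{G})$ is minimal.
   Context: An abstract storage device (ASD) is a pair $D=(\mathcal{S}_D,\mathcal{P}_D)$, $\mathcal{S}_D$ a finite set and $\mathcal{P}_D$ a finite family of partitions of $\mathcal{S}_D$. For a partition $\pi$ of $\mathcal{S}'$ and $\phi:\mathcal{S}\to\mathcal{S}'$, $\pi\circ\phi$ is the partition of $\mathcal{S}$ with $x,y$ in the same block iff $\phi(x),\phi(y)$ are in the same block of $\pi$; $\pi\preceq\rho$ means every block of $\pi$ lies in a block of $\rho$. $D\le D'$ means there exist $\phi:\mathcal{S}_D\to\mathcal{S}_{D'}$, $\alpha:\mathcal{P}_D\to\mathcal{P}_{D'}$ with $\alpha(\pi)\circ\phi\preceq\pi$ for all $\pi\in\mathcal{P}_D$; $D\equiv D'$ means $D\le D'$ and $D'\le D$. $D$ is minimal if no $E\equiv D$ has $|\mathcal{S}_E|<|\mathcal{S}_D|$ and no $E\equiv D$ has $|\mathcal{P}_E|<|\mathcal{P}_D|$. For a finite undirected graph $\mathcal{G}=(\mathcal{V},\mathcal{E})$, the graph device $D(\mathcal{G})$ has state space $\mathcal{V}$ and partition set $\{\pi_e:e\in\mathcal{E}\}$, where for $e=\{u,v\}$, $\pi_e=\{\{u\},\{v\},\mathcal{V}\setminus\{u,v\}\}$. A vertex is isolated if it lies in no edge. *)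

theory Defs
  imports Main "HOL-Library.Disjoint_Sets"
begin

text \<open>An abstract storage device: a pair (state set, family of partitions of the state set).
  A partition is a set of blocks (library notion partition_on).\<close>

type_synonym 'a asd = "'a set \<times> 'a set set set"

definition states :: "'a asd \<Rightarrow> 'a set" where
  "states D = fst D"

definition parts :: "'a asd \<Rightarrow> 'a set set set" where
  "parts D = snd D"

definition is_asd :: "'a asd \<Rightarrow> bool" where
  "is_asd D \<longleftrightarrow> finite (states D) \<and> finite (parts D) \<and>
     (\<forall>\<pi>\<in>parts D. partition_on (states D) \<pi>)"

definition pullback :: "'b set set \<Rightarrow> ('a \<Rightarrow> 'b) \<Rightarrow> 'a set \<Rightarrow> 'a set set" where
  "pullback \<pi> \<phi> S = (\<lambda>x. {y \<in> S. \<exists>B\<in>\<pi>. \<phi> x \<in> B \<and> \<phi> y \<in> B}) ` S"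

definition refines :: "'a set set \<Rightarrow> 'a set set \<Rightarrow> bool" where
  "refines \<pi> \<rho> \<longleftrightarrow> (\<forall>B\<in>\<pi>. \<exists>C\<in>\<rho>. B \<subseteq> C)"

definition asd_le :: "'a asd \<Rightarrow> 'b asd \<Rightarrow> bool" where
  "asd_le D D' \<longleftrightarrow> (\<exists>(\<phi>::'a \<Rightarrow> 'b) (\<alpha>::'a set set \<Rightarrow> 'b set set).
     (\<forall>x\<in>states D. \<phi> x \<in> states D') \<and>
     (\<forall>\<pi>\<in>parts D. \<alpha> \<pi> \<in> parts D') \<and>
     (\<forall>\<pi>\<in>parts D. refines (pullback (\<alpha> \<pi>) \<phi> (states D)) \<pi>))"

definition asd_equiv :: "'a asd \<Rightarrow> 'b asd \<Rightarrow> bool" where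
  "asd_equiv D D' \<longleftrightarrow> asd_le D D' \<and> asd_le D' D"

text \<open>Minimality. The competing devices E range over ASDs with states of type 'b;
  the main theorem leaves 'b free, i.e. quantifies over all state types.\<close>

definition minimal :: "'b itself \<Rightarrow> 'a asd \<Rightarrow> bool" where
  "minimal _ D \<longleftrightarrow> is_asd D \<and>
     (\<forall>E::'b asd. is_asd E \<and> asd_equiv E D \<longrightarrow>
        card (states D) \<le> card (states E) \<and> card (parts D) \<le> card (parts E))"

definition is_graph :: "'a set \<Rightarrow> 'a set set \<Rightarrow> bool" where
  "is_graph V Ed \<longleftrightarrow> finite V \<and> (\<forall>e\<in>Ed. e \<subseteq> V \<and> card e = 2)"

definition edge_partition :: "'a set \<Rightarrow> 'a set \<Rightarrow> 'a set set" where
  "edge_partition V e = (\<lambda>x. {x}) ` e \<union> {V - e}"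

definition graph_device :: "'a set \<Rightarrow> 'a set set \<Rightarrow> 'a asd" where
  "graph_device V Ed = (V, edge_partition V ` Ed)"

definition no_isolated :: "'a set \<Rightarrow> 'a set set \<Rightarrow> bool" where
  "no_isolated V Ed \<longleftrightarrow> (\<forall>v\<in>V. \<exists>e\<in>Ed. v \<in> e)"

end

theory Submission
  imports Defs
begin

lemma sep: "x \<in> e \<Longrightarrow> x \<noteq> y \<Longrightarrow> \<not>(\<exists>C\<in>edge_partition V e. x\<in>C \<and> y\<in>C)"
  by (auto simp: edge_partition_def)

lemma pb:
  assumes "refines (pullback \<rho> \<psi> S) \<pi>" "x\<in>S" "y\<in>S" "\<exists>B\<in>\<rho>. \<psi> x\<in>B \<and> \<psi> y\<in>B"
  shows "\<exists>C\<in>\<pi>. x\<in>C \<and> y\<in>C"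
proof -
  let ?Bx = "{z\<in>S. \<exists>B\<in>\<rho>. \<psi> x\<in>B \<and> \<psi> z\<in>B}"
  have "?Bx \<in> pullback \<rho> \<psi> S" using assms(2) unfolding pullback_def by blast
  then obtain C where "C\<in>\<pi>" "?Bx \<subseteq> C" using assms(1) unfolding refines_def by blast
  moreover have "x \<in> ?Bx" "y \<in> ?Bx" using assms by auto
  ultimately show ?thesis by blast
qed

lemma three_blocks:
  assumes "card g = 2" "qa\<in>V" "qb\<in>V" "qc\<in>V" "qd\<in>V"
  and h12: "\<not>(\<exists>C\<in>edge_partition V g. qa\<in>C \<and> qb\<in>C)"
  and h13: "\<not>(\<exists>C\<in>edge_partition V g. qa\<in>C \<and> qc\<in>C)"
  and h14: "\<not>(\<exists>C\<in>edge_partition V g. qa\<in>C \<and> qd\<in>C)"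
  and h23: "\<not>(\<exists>C\<in>edge_partition V g. qb\<in>C \<and> qc\<in>C)"
  and h24: "\<not>(\<exists>C\<in>edge_partition V g. qb\<in>C \<and> qd\<in>C)"
  and h34: "\<not>(\<exists>C\<in>edge_partition V g. qc\<in>C \<and> qd\<in>C)"
  shows False
proof -
  obtain a b where g: "g = {a,b}" "a \<noteq> b" using assms(1) by (meson card_2_iff)
  have sm: "\<And>x y. x \<in> V \<Longrightarrow> y \<in> V \<Longrightarrow> (\<exists>C\<in>edge_partition V g. x\<in>C \<and> y\<in>C) \<longleftrightarrow>
     (x = a \<and> y = a) \<or> (x = b \<and> y = b) \<or> (x \<notin> g \<and> y \<notin> g)"
    unfolding edge_partition_def g by auto
  have c: "\<And>x. x = a \<or> x = b \<or> x \<notin> g" using g by auto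
  have n12: "\<not> ((qa = a \<and> qb = a) \<or> (qa = b \<and> qb = b) \<or> (qa \<notin> g \<and> qb \<notin> g))"
    using h12 sm[of qa qb] assms(2-5) by blast
  have n13: "\<not> ((qa = a \<and> qc = a) \<or> (qa = b \<and> qc = b) \<or> (qa \<notin> g \<and> qc \<notin> g))"
    using h13 sm[of qa qc] assms(2-5) by blast
  have n14: "\<not> ((qa = a \<and> qd = a) \<or> (qa = b \<and> qd = b) \<or> (qa \<notin> g \<and> qd \<notin> g))"
    using h14 sm[of qa qd] assms(2-5) by blast
  have n23: "\<not> ((qb = a \<and> qc = a) \<or> (qb = b \<and> qc = b) \<or> (qb \<notin> g \<and> qc \<notin> g))"
    using h23 sm[of qb qc] assms(2-5) by blast
  have n24: "\<not> ((qb = a \<and> qd = a) \<or> (qb = b \<and> qd = b) \<or> (qb \<notin> g \<and> qd \<notin> g))"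
    using h24 sm[of qb qd] assms(2-5) by blast
  have n34: "\<not> ((qc = a \<and> qd = a) \<or> (qc = b \<and> qd = b) \<or> (qc \<notin> g \<and> qd \<notin> g))"
    using h34 sm[of qc qd] assms(2-5) by blast
  show False using c[of qa] c[of qb] c[of qc] c[of qd] n12 n13 n14 n23 n24 n34
    by (elim disjE) simp_all
qed

lemma ep_partition:
  assumes "e \<subseteq> V" "card e = 2" "finite V" "card V \<ge> 4"
  shows "partition_on V (edge_partition V e)"
proof -
  obtain a b where g: "e = {a,b}" "a \<noteq> b" using assms(2) by (meson card_2_iff)
  have "card (V - e) = card V - 2" using assms by (simp add: card_Diff_subset finite_subset)
  moreover have "card V - 2 > 0" using assms(4) by simp
  ultimately have "card (V - e) > 0" by simp
  hence "V - e \<noteq> {}" by (metis card.empty less_irrefl)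
  thus ?thesis using assms(1) g unfolding partition_on_def disjoint_def edge_partition_def by auto
qed

lemma part_cover:
  assumes "partition_on S P" "x \<in> S" shows "\<exists>B\<in>P. x \<in> B \<and> x \<in> B"
  using assms unfolding partition_on_def by blast

theorem lemma2:
  fixes V :: "'a set" and Ed :: "'a set set"
  assumes "is_graph V Ed" and "card V \<ge> 4" and "no_isolated V Ed"
  shows "minimal TYPE('b) (graph_device V Ed)"
proof -
  have fV: "finite V" and ed: "\<And>e. e \<in> Ed \<Longrightarrow> e \<subseteq> V \<and> card e = 2"
    using assms(1) unfolding is_graph_def by auto
  have "Ed \<subseteq> Pow V" using ed by blast
  hence fEd: "finite Ed" using fV by (simp add: finite_subset)
  have st: "states (graph_device V Ed) = V" and pt: "parts (graph_device V Ed) = edge_partition V ` Ed"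
    by (simp_all add: states_def parts_def graph_device_def)
  have "\<forall>\<pi>\<in>edge_partition V ` Ed. partition_on V \<pi>"
  proof
    fix \<pi> assume "\<pi> \<in> edge_partition V ` Ed"
    then obtain e where "e \<in> Ed" "\<pi> = edge_partition V e" by blast
    thus "partition_on V \<pi>" using ep_partition[of e V] ed fV assms(2) by simp
  qed
  hence asdD: "is_asd (graph_device V Ed)"
    unfolding is_asd_def st pt using fV fEd by simp
  have main: "card (states (graph_device V Ed)) \<le> card (states E) \<and>
          card (parts (graph_device V Ed)) \<le> card (parts E)"
    if EE: "is_asd E \<and> asd_equiv E (graph_device V Ed)" for E :: "'b asd"
  proof -
    from EE have fSE: "finite (states E)" and fPE: "finite (parts E)"
      and pE: "\<And>\<rho>. \<rho> \<in> parts E \<Longrightarrow> partition_on (states E) \<rho>"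
      unfolding is_asd_def by auto
    from EE have le1: "asd_le E (graph_device V Ed)" and le2: "asd_le (graph_device V Ed) E"
      unfolding asd_equiv_def by auto
    from le1 obtain \<phi> :: "'b \<Rightarrow> 'a" and \<alpha> where
      H1: "(\<forall>x\<in>states E. \<phi> x \<in> states (graph_device V Ed)) \<and>
     (\<forall>\<pi>\<in>parts E. \<alpha> \<pi> \<in> parts (graph_device V Ed)) \<and>
     (\<forall>\<pi>\<in>parts E. refines (pullback (\<alpha> \<pi>) \<phi> (states E)) \<pi>)"
      unfolding asd_le_def by (elim exE)
    hence phi: "\<forall>x\<in>states E. \<phi> x \<in> V" and al: "\<forall>\<rho>\<in>parts E. \<alpha> \<rho> \<in> edge_partition V ` Ed"
      and ref1: "\<forall>\<rho>\<in>parts E. refines (pullback (\<alpha> \<rho>) \<phi> (states E)) \<rho>"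
      unfolding st pt by auto
    from le2 obtain \<psi> :: "'a \<Rightarrow> 'b" and \<beta> where
      H2: "(\<forall>x\<in>states (graph_device V Ed). \<psi> x \<in> states E) \<and>
     (\<forall>\<pi>\<in>parts (graph_device V Ed). \<beta> \<pi> \<in> parts E) \<and>
     (\<forall>\<pi>\<in>parts (graph_device V Ed). refines (pullback (\<beta> \<pi>) \<psi> (states (graph_device V Ed))) \<pi>)"
      unfolding asd_le_def by (elim exE)
    hence psi: "\<forall>x\<in>V. \<psi> x \<in> states E" and be: "\<forall>\<pi>\<in>edge_partition V ` Ed. \<beta> \<pi> \<in> parts E"
      and ref2: "\<forall>\<pi>\<in>edge_partition V ` Ed. refines (pullback (\<beta> \<pi>) \<psi> V) \<pi>"
      unfolding st pt by auto
    have inj1: "inj_on \<psi> V"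
    proof (rule inj_onI, rule ccontr)
      fix u v assume uv: "u \<in> V" "v \<in> V" "\<psi> u = \<psi> v" "u \<noteq> v"
      obtain e where e: "e \<in> Ed" "u \<in> e" using assms(3) uv unfolding no_isolated_def by blast
      let ?\<rho> = "\<beta> (edge_partition V e)"
      have r: "?\<rho> \<in> parts E" using be e(1) by blast
      have pu: "\<psi> u \<in> states E" using psi uv(1) by blast
      obtain B where B: "B \<in> ?\<rho>" "\<psi> u \<in> B" using pE[OF r] pu unfolding partition_on_def by blast
      hence h: "\<exists>B\<in>?\<rho>. \<psi> u \<in> B \<and> \<psi> v \<in> B" using uv(3) by auto
      have rf: "refines (pullback ?\<rho> \<psi> V) (edge_partition V e)" using ref2 e(1) by blast
      show False using pb[OF rf uv(1,2) h] sep[OF e(2) uv(4)] by blast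
    qed
    have "\<psi> ` V \<subseteq> states E" using psi by blast
    hence c1: "card V \<le> card (states E)"
      using card_inj_on_le[OF inj1 _ fSE] by blast
    have inj2: "inj_on \<beta> (edge_partition V ` Ed)"
    proof (rule inj_onI, rule ccontr)
      fix p q assume pq: "p \<in> edge_partition V ` Ed" "q \<in> edge_partition V ` Ed" "\<beta> p = \<beta> q" "p \<noteq> q"
      obtain e where e1: "e \<in> Ed" "p = edge_partition V e" using pq(1) by (rule imageE) simp
      obtain f where f1: "f \<in> Ed" "q = edge_partition V f" using pq(2) by (rule imageE) simp
      note ef = e1(1) f1(1) e1(2) f1(2)
      have "e \<noteq> f" using ef(3,4) pq(4) by auto
      obtain u v where e2: "e = {u,v}" "u \<noteq> v" using ed[OF ef(1)] by (meson card_2_iff)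
      have "\<not> f \<subseteq> e"
      proof
        assume "f \<subseteq> e"
        moreover have "finite e" using e2 by simp
        moreover have "card f = card e" using ed[OF ef(1)] ed[OF ef(2)] by simp
        ultimately have "f = e" using card_subset_eq by blast
        thus False using \<open>e \<noteq> f\<close> by simp
      qed
      then obtain w where w: "w \<in> f" "w \<notin> e" by blast
      have uvw: "u \<in> V" "v \<in> V" "w \<in> V" using ed[OF ef(1)] ed[OF ef(2)] e2 w(1) by auto
      have "card {u,v,w} \<le> 3" by (simp add: card_insert_le_m1)
      have "\<not> V \<subseteq> {u,v,w}"
      proof
        assume "V \<subseteq> {u,v,w}"
        hence "card V \<le> card {u,v,w}" by (simp add: card_mono)
        thus False using \<open>card {u,v,w} \<le> 3\<close> assms(2) by linarith
      qed
      then obtain z where z: "z \<in> V" "z \<notin> {u,v,w}" by blast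
      let ?\<rho> = "\<beta> p"
      have rho: "?\<rho> \<in> parts E" using be pq by blast
      obtain g where g: "g \<in> Ed" "\<alpha> ?\<rho> = edge_partition V g" using al rho by blast
      from ref1 rho have "refines (pullback (\<alpha> ?\<rho>) \<phi> (states E)) ?\<rho>" by blast
      hence r1: "refines (pullback (edge_partition V g) \<phi> (states E)) ?\<rho>" using g(2) by simp
      from ref2 pq(1) have r2: "refines (pullback (\<beta> p) \<psi> V) p" by blast
      from ref2 pq(2) have "refines (pullback (\<beta> q) \<psi> V) q" by blast
      hence r3: "refines (pullback (\<beta> p) \<psi> V) q" using pq(3) by simp
      have key: "\<not>(\<exists>C\<in>edge_partition V g. \<phi> (\<psi> x)\<in>C \<and> \<phi> (\<psi> y)\<in>C)"
        if xy: "x \<in> V" "y \<in> V" "x \<noteq> y" "x \<in> e \<or> x \<in> f" for x y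
      proof
        assume h: "\<exists>C\<in>edge_partition V g. \<phi> (\<psi> x)\<in>C \<and> \<phi> (\<psi> y)\<in>C"
        have px: "\<psi> x \<in> states E" and py: "\<psi> y \<in> states E" using psi xy by auto
        have "\<exists>B\<in>?\<rho>. \<psi> x \<in> B \<and> \<psi> y \<in> B" using pb[OF r1 px py h] .
        hence "\<exists>C\<in>p. x\<in>C \<and> y\<in>C" "\<exists>C\<in>q. x\<in>C \<and> y\<in>C"
          using pb[OF r2 xy(1,2)] pb[OF r3 xy(1,2)] by auto
        thus False using sep[of x e y V] sep[of x f y V] xy ef by auto
      qed
      have gV: "card g = 2" using ed g(1) by blast
      have d: "u \<noteq> w" "v \<noteq> w" "u \<noteq> z" "v \<noteq> z" "w \<noteq> z" using w e2 z by auto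
      have m: "u \<in> e" "v \<in> e" using e2 by auto
      show False
      proof (rule three_blocks[OF gV, where V=V and qa="\<phi> (\<psi> u)" and qb="\<phi> (\<psi> v)" and qc="\<phi> (\<psi> w)" and qd="\<phi> (\<psi> z)"])
        show "\<phi> (\<psi> u) \<in> V" "\<phi> (\<psi> v) \<in> V" "\<phi> (\<psi> w) \<in> V" "\<phi> (\<psi> z) \<in> V"
          using phi psi uvw z(1) by auto
        show "\<not>(\<exists>C\<in>edge_partition V g. \<phi> (\<psi> u)\<in>C \<and> \<phi> (\<psi> v)\<in>C)"
          using key[of u v] uvw e2(2) m by blast
        show "\<not>(\<exists>C\<in>edge_partition V g. \<phi> (\<psi> u)\<in>C \<and> \<phi> (\<psi> w)\<in>C)"
          using key[of u w] uvw d m by blast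
        show "\<not>(\<exists>C\<in>edge_partition V g. \<phi> (\<psi> u)\<in>C \<and> \<phi> (\<psi> z)\<in>C)"
          using key[of u z] uvw z(1) d m by blast
        show "\<not>(\<exists>C\<in>edge_partition V g. \<phi> (\<psi> v)\<in>C \<and> \<phi> (\<psi> w)\<in>C)"
          using key[of v w] uvw d m by blast
        show "\<not>(\<exists>C\<in>edge_partition V g. \<phi> (\<psi> v)\<in>C \<and> \<phi> (\<psi> z)\<in>C)"
          using key[of v z] uvw z(1) d m by blast
        show "\<not>(\<exists>C\<in>edge_partition V g. \<phi> (\<psi> w)\<in>C \<and> \<phi> (\<psi> z)\<in>C)"
          using key[of w z] uvw z(1) d w(1) by blast
      qed
    qed
    have "\<beta> ` (edge_partition V ` Ed) \<subseteq> parts E" using be by blast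
    hence c2: "card (edge_partition V ` Ed) \<le> card (parts E)"
      using card_inj_on_le[OF inj2 _ fPE] by blast
    show ?thesis using c1 c2 st pt by simp
  qed
  show ?thesis unfolding minimal_def using asdD main by blast
qed

end
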